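(* Let $q$ be a prime power and let $n,k,r$ be integers with $3\le k\le n-2\le q-2$ and $1\le r\le k-1$. Let $\alpha_1,\dots,\alpha_n\in\mathbb{F}_q$ be pairwise distinct. Let $C_{k-r,k-r-1}$ be the linear code generated by the $k\times n$ matrix $G_{k-r,k-r-1}$ whose rows are $(\alpha_1^{e},\dots,\alpha_n^{e})$ for $e=0,1,\dots,k-r-2$ and $e=k-r+1,k-r+2,\dots,k+1$. Then $C_{k-r,k-r-1}$ is MDS if and only if $$\sigma_{r+1}(\beta_1,\dots,\beta_k)^2-\sigma_r(\beta_1,\dots,\beta_k)\,\sigma_{r+2}(\beta_1,\dots,\beta_k)\neq 0$$ for every $k$-element subset $\{\beta_1,\dots,\beta_k\}\subseteq\{\alpha_1,\dots,\alpha_n\}$ (with distinct $\beta_i$).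
   Context: Convention: $0^0=1$. $\sigma_t(x_1,\dots,x_m)$ is the $t$-th elementary symmetric polynomial, with $\sigma_0=1$ and $\sigma_t=0$ for $t>m$. A linear code is MDS if its parameters $[n,k,d]$ satisfy $d=n-k+1$. *)

theory Defs
  imports Complex_Main "HOL-Library.Function_Algebras"
begin

text \<open>Words of length n over a field are functions nat => 'a vanishing outside {..<n}
  (coordinates 0..n-1).\<close>

definition hamming_dist :: "nat \<Rightarrow> (nat \<Rightarrow> 'a) \<Rightarrow> (nat \<Rightarrow> 'a) \<Rightarrow> nat" where
  "hamming_dist n c c' = card {j. j < n \<and> c j \<noteq> c' j}"

definition gen_code :: "nat \<Rightarrow> nat \<Rightarrow> (nat \<Rightarrow> nat \<Rightarrow> 'a::field) \<Rightarrow> (nat \<Rightarrow> 'a) set" where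
  "gen_code n k G = {c. \<exists>m::nat \<Rightarrow> 'a. c = (\<lambda>j. if j < n then (\<Sum>i<k. m i * G i j) else 0)}"

definition word_scale :: "'a::field \<Rightarrow> (nat \<Rightarrow> 'a) \<Rightarrow> (nat \<Rightarrow> 'a)" where
  "word_scale a c = (\<lambda>j. a * c j)"

definition code_dim :: "(nat \<Rightarrow> 'a::field) set \<Rightarrow> nat" where
  "code_dim C = vector_space.dim word_scale C"

definition min_dist :: "nat \<Rightarrow> (nat \<Rightarrow> 'a) set \<Rightarrow> nat" where
  "min_dist n C = Min {hamming_dist n c c' | c c'. c \<in> C \<and> c' \<in> C \<and> c \<noteq> c'}"

definition is_MDS :: "nat \<Rightarrow> (nat \<Rightarrow> 'a::field) set \<Rightarrow> bool" where
  "is_MDS n C \<longleftrightarrow> min_dist n C = n - code_dim C + 1"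

text \<open>t-th elementary symmetric polynomial of the elements of a finite set B
  (sigma_0 = 1, sigma_t = 0 for t > card B).\<close>
definition esym :: "nat \<Rightarrow> 'a::comm_ring_1 set \<Rightarrow> 'a" where
  "esym t B = (\<Sum>T\<in>{T. T \<subseteq> B \<and> card T = t}. \<Prod>T)"

text \<open>Exponents of the rows of G_{k-r,k-r-1}: 0..k-r-2, then k-r+1..k+1.\<close>
definition row_exp :: "nat \<Rightarrow> nat \<Rightarrow> nat \<Rightarrow> nat" where
  "row_exp k r i = (if i < k - r - 1 then i else i + 2)"

definition G_mat :: "nat \<Rightarrow> nat \<Rightarrow> (nat \<Rightarrow> 'a::field) \<Rightarrow> nat \<Rightarrow> nat \<Rightarrow> 'a" where
  "G_mat k r \<alpha> i j = \<alpha> j ^ row_exp k r i"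

end

theory Submission
  imports Defs "HOL-Computational_Algebra.Polynomial"
begin

lemma fun_sum_apply: "(\<Sum>i\<in>A. f i) x = (\<Sum>i\<in>A. f i x)"
  for f :: "'i \<Rightarrow> 'x \<Rightarrow> 'b::comm_monoid_add"
  by (induction A rule: infinite_finite_induct) auto

lemma vs_word_scale: "vector_space (word_scale :: 'a::field \<Rightarrow> _)"
  unfolding vector_space_def word_scale_def by (auto simp: fun_eq_iff algebra_simps)

lemma poly_zero_many_roots:
  fixes p :: "'a::field poly"
  assumes "degree p < n" "inj_on \<alpha> {..<n}" "\<forall>j<n. poly p (\<alpha> j) = 0"
  shows "p = 0"
proof (rule ccontr)
  assume h: "p \<noteq> 0"
  have "\<alpha> ` {..<n} \<subseteq> {x. poly p x = 0}" using assms(3) by auto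
  hence "card (\<alpha> ` {..<n}) \<le> card {x. poly p x = 0}"
    using poly_roots_finite[OF h] by (simp add: card_mono)
  also have "\<dots> \<le> degree p" by (rule card_poly_roots_bound[OF h])
  finally show False using assms(1,2) by (simp add: card_image)
qed

lemma row_exp_le: "i < k \<Longrightarrow> row_exp k r i \<le> Suc k"
  by (auto simp: row_exp_def)

lemma row_exp_ne1: "r \<le> k - 1 \<Longrightarrow> row_exp k r i \<noteq> k - r - 1"
  by (auto simp: row_exp_def)

lemma row_exp_ne2: "r \<le> k - 1 \<Longrightarrow> 1 \<le> k \<Longrightarrow> row_exp k r i \<noteq> k - r"
  by (auto simp: row_exp_def)

lemma row_exp_inj: "inj (row_exp k r)"
  by (auto simp: inj_def row_exp_def split: if_splits)

lemma row_exp_surj: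
  assumes "r \<le> k - 1" "1 \<le> k" "t \<le> k + 1" "t \<noteq> k - r - 1" "t \<noteq> k - r"
  shows "t \<in> row_exp k r ` {..<k}"
proof (cases "t < k - r - 1")
  case True
  then show ?thesis using assms by (intro image_eqI[of _ _ t]) (auto simp: row_exp_def)
next
  case False
  then show ?thesis using assms by (intro image_eqI[of _ _ "t - 2"]) (auto simp: row_exp_def)
qed

definition SS :: "nat \<Rightarrow> nat \<Rightarrow> 'a::field poly set" where
  "SS k r = {f. degree f \<le> k + 1 \<and> coeff f (k - r - 1) = 0 \<and> coeff f (k - r) = 0}"

definition ev :: "nat \<Rightarrow> (nat \<Rightarrow> 'a::field) \<Rightarrow> 'a poly \<Rightarrow> nat \<Rightarrow> 'a" where
  "ev n \<alpha> f = (\<lambda>j. if j < n then poly f (\<alpha> j) else 0)"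

lemma poly_SS:
  assumes "f \<in> SS k r" "r \<le> k - 1" "1 \<le> k"
  shows "poly f x = (\<Sum>i<k. coeff f (row_exp k r i) * x ^ row_exp k r i)"
proof -
  have "poly f x = (\<Sum>t\<le>k+1. coeff f t * x ^ t)"
    unfolding poly_altdef using assms(1)
    by (intro sum.mono_neutral_left) (auto simp: SS_def coeff_eq_0)
  also have "\<dots> = (\<Sum>t\<in>row_exp k r ` {..<k}. coeff f t * x ^ t)"
    using assms row_exp_surj[OF assms(2,3)]
    by (intro sum.mono_neutral_right) (auto simp: SS_def row_exp_le)
  also have "\<dots> = (\<Sum>i<k. coeff f (row_exp k r i) * x ^ row_exp k r i)"
    using row_exp_inj by (subst sum.reindex) (auto intro: inj_on_subset)
  finally show ?thesis .
qed

lemma monsum_SS: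
  assumes "r \<le> k - 1" "1 \<le> k"
  shows "(\<Sum>i<k. monom (m i) (row_exp k r i)) \<in> SS k r"
  unfolding SS_def using row_exp_ne1[OF assms(1)] row_exp_ne2[OF assms]
  by (auto simp: coeff_sum row_exp_le intro!: degree_sum_le order.trans[OF degree_monom_le])

lemma coeff_monsum: "i < k \<Longrightarrow> coeff (\<Sum>i<k. monom (m i) (row_exp k r i)) (row_exp k r i) = m i"
  using row_exp_inj[of k r]
  by (simp add: coeff_sum inj_eq if_distrib cong: if_cong)

lemma code_eq:
  assumes "r \<le> k - 1" "1 \<le> k"
  shows "gen_code n k (G_mat k r \<alpha>) = ev n \<alpha> ` SS k r"
proof safe
  fix c assume "c \<in> gen_code n k (G_mat k r \<alpha>)"
  then obtain m where c: "c = (\<lambda>j. if j < n then (\<Sum>i<k. m i * G_mat k r \<alpha> i j) else 0)"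
    unfolding gen_code_def by auto
  let ?f = "\<Sum>i<k. monom (m i) (row_exp k r i)"
  have "c = ev n \<alpha> ?f" unfolding c ev_def G_mat_def
    by (auto simp: poly_sum poly_monom)
  then show "c \<in> ev n \<alpha> ` SS k r" using monsum_SS[OF assms] by blast
next
  fix f :: "'a poly" assume f: "f \<in> SS k r"
  show "ev n \<alpha> f \<in> gen_code n k (G_mat k r \<alpha>)"
    unfolding gen_code_def ev_def G_mat_def
    by (intro CollectI exI[of _ "\<lambda>i. coeff f (row_exp k r i)"])
       (auto simp: poly_SS[OF f assms])
qed


lemma ev_lin:
  "(\<Sum>i<k. word_scale (m i) (ev n \<alpha> (monom 1 (e i)))) = ev n \<alpha> (\<Sum>i<k. monom (m i) (e i))"
  by (auto simp: fun_eq_iff fun_sum_apply word_scale_def ev_def poly_sum poly_monom)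

lemma ev_zero_imp:
  assumes "ev n \<alpha> p = 0" "degree p < n" "inj_on \<alpha> {..<n}"
  shows "p = 0"
proof (rule poly_zero_many_roots[OF assms(2,3)], intro allI impI)
  fix j assume "j < n"
  then show "poly p (\<alpha> j) = 0" using fun_cong[OF assms(1), of j] by (simp add: ev_def)
qed

lemma code_dim_eq:
  fixes \<alpha> :: "nat \<Rightarrow> 'a::field"
  assumes "r \<le> k - 1" "1 \<le> k" "k + 2 \<le> n" "inj_on \<alpha> {..<n}"
  shows "code_dim (ev n \<alpha> ` SS k r) = k"
proof -
  interpret V: vector_space "word_scale :: 'a \<Rightarrow> (nat \<Rightarrow> 'a) \<Rightarrow> _" by (rule vs_word_scale)
  define rw where "rw i = ev n \<alpha> (monom 1 (row_exp k r i))" for i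
  have inj: "inj_on rw {..<k}"
  proof
    fix i i' assume i: "i \<in> {..<k}" "i' \<in> {..<k}" "rw i = rw i'"
    let ?p = "monom (1::'a) (row_exp k r i) - monom 1 (row_exp k r i')"
    have "ev n \<alpha> ?p = 0"
    proof
      fix x show "ev n \<alpha> ?p x = 0 x"
        using fun_cong[OF i(3), of x] unfolding rw_def ev_def by (auto simp: poly_monom)
    qed
    moreover have "degree ?p < n"
      using i assms row_exp_le[of i k r] row_exp_le[of i' k r]
      by (intro le_less_trans[OF degree_diff_le]) (auto simp: degree_monom_eq)
    ultimately have "?p = 0" using ev_zero_imp assms(4) by blast
    hence "coeff ?p (row_exp k r i) = 0" by simp
    hence "row_exp k r i = row_exp k r i'" by (auto split: if_splits)
    then show "i = i'" using row_exp_inj by (auto dest: injD)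
  qed
  have lin: "(\<Sum>v\<in>rw ` {..<k}. word_scale (u v) v) = ev n \<alpha> (\<Sum>i<k. monom (u (rw i)) (row_exp k r i))" for u
    using ev_lin[where m="\<lambda>i. u (rw i)" and k=k and n=n and \<alpha>=\<alpha> and e="row_exp k r"] inj
    by (subst sum.reindex[OF inj]) (simp add: rw_def)
  have deg: "degree (\<Sum>i<k. monom (m i) (row_exp k r i)) < n" for m :: "nat \<Rightarrow> 'a"
    using monsum_SS[OF assms(1,2), of m] assms(3) by (auto simp: SS_def)
  have span: "V.span (rw ` {..<k}) = ev n \<alpha> ` SS k r"
  proof -
    have "V.span (rw ` {..<k}) = range (\<lambda>u. \<Sum>v\<in>rw ` {..<k}. word_scale (u v) v)"
      by (rule V.span_finite) simp
    also have "\<dots> = ev n \<alpha> ` SS k r"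
    proof safe
      fix u show "(\<Sum>v\<in>rw ` {..<k}. word_scale (u v) v) \<in> ev n \<alpha> ` SS k r"
        unfolding lin by (rule imageI[OF monsum_SS[OF assms(1,2)]])
    next
      fix f :: "'a poly" assume f: "f \<in> SS k r"
      define u where "u v = coeff f (row_exp k r (inv_into {..<k} rw v))" for v
      have "ev n \<alpha> f = ev n \<alpha> (\<Sum>i<k. monom (u (rw i)) (row_exp k r i))"
        using inj by (auto simp: fun_eq_iff ev_def poly_sum poly_monom u_def poly_SS[OF f assms(1,2)])
      then show "ev n \<alpha> f \<in> range (\<lambda>u. \<Sum>v\<in>rw ` {..<k}. word_scale (u v) v)"
        unfolding lin by blast
    qed
    finally show ?thesis .
  qed
  have indep: "V.independent (rw ` {..<k})"
  proof
    assume "V.dependent (rw ` {..<k})"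
    then obtain u where u: "\<exists>v\<in>rw ` {..<k}. u v \<noteq> 0" "(\<Sum>v\<in>rw ` {..<k}. word_scale (u v) v) = 0"
      using V.dependent_finite by blast
    have "(\<Sum>i<k. monom (u (rw i)) (row_exp k r i)) = 0"
      by (rule ev_zero_imp[OF u(2)[unfolded lin] deg assms(4)])
    hence "u (rw i) = 0" if "i < k" for i
      using coeff_monsum[OF that, of "\<lambda>i. u (rw i)" r] by simp
    then show False using u(1) by auto
  qed
  have "code_dim (ev n \<alpha> ` SS k r) = V.dim (V.span (rw ` {..<k}))"
    unfolding code_dim_def span ..
  also have "\<dots> = card (rw ` {..<k})" by (rule V.dim_span_eq_card_independent[OF indep])
  also have "\<dots> = k" using inj by (simp add: card_image)
  finally show ?thesis .
qed


lemma coeff_PB: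
  fixes B :: "'a::field set"
  assumes "finite B" "t \<le> card B"
  shows "coeff (\<Prod>b\<in>B. [:-b,1:]) t = (-1)^(card B - t) * esym (card B - t) B"
proof -
  have "(\<Prod>b\<in>B. [:-b,1:]) = (\<Prod>b\<in>B. [:-b:] + [:0,1:])" by simp
  also have "\<dots> = (\<Sum>T\<in>Pow B. (\<Prod>b\<in>T. [:-b:]) * (\<Prod>b\<in>B-T. [:0,1:]))"
    by (rule prod_add[OF assms(1)])
  also have "\<dots> = (\<Sum>T\<in>Pow B. monom ((-1)^card T * \<Prod>T) (card (B - T)))"
    by (intro sum.cong refl)
       (simp add: prod_to_poly prod_uminus monom_altdef)
  finally have "coeff (\<Prod>b\<in>B. [:-b,1:]) t =
      (\<Sum>T\<in>Pow B. if card (B - T) = t then (-1)^card T * \<Prod>T else 0)"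
    by (simp add: coeff_sum)
  also have "\<dots> = (\<Sum>T\<in>{T\<in>Pow B. card (B - T) = t}. (-1)^card T * \<Prod>T)"
    using assms(1) by (subst sum.inter_filter) auto
  also have "{T\<in>Pow B. card (B - T) = t} = {T. T \<subseteq> B \<and> card T = card B - t}"
  proof -
    have h: "card (B - T) = card B - card T" "card T \<le> card B" if "T \<subseteq> B" for T
      using that assms(1) by (auto simp: card_Diff_subset finite_subset card_mono)
    show ?thesis
    proof (rule set_eqI)
      fix T show "T \<in> {T\<in>Pow B. card (B - T) = t} \<longleftrightarrow> T \<in> {T. T \<subseteq> B \<and> card T = card B - t}"
        using assms(2) by (cases "T \<subseteq> B") (auto simp: h)
    qed
  qed
  also have "(\<Sum>T\<in>{T. T \<subseteq> B \<and> card T = card B - t}. (-1)^card T * \<Prod>T) =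
      (\<Sum>T\<in>{T. T \<subseteq> B \<and> card T = card B - t}. (-1)^(card B - t) * \<Prod>T)"
    by (intro sum.cong) auto
  finally show ?thesis by (simp add: esym_def sum_distrib_left)
qed


lemma PB_dvd:
  fixes f :: "'a::field poly"
  assumes "finite B" "\<forall>b\<in>B. poly f b = 0"
  shows "(\<Prod>b\<in>B. [:-b,1:]) dvd f"
  using assms
proof (induction B arbitrary: f rule: finite_induct)
  case empty then show ?case by simp
next
  case (insert x B)
  have "[:-x,1:] dvd f" using insert.prems by (simp add: poly_eq_0_iff_dvd)
  then obtain g where g: "f = [:-x,1:] * g" by (elim dvdE)
  have "\<forall>b\<in>B. poly g b = 0"
  proof
    fix b assume "b \<in> B"
    then have "b \<noteq> x" "poly f b = 0" using insert by auto
    then show "poly g b = 0" using g by simp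
  qed
  then have "(\<Prod>b\<in>B. [:-b,1:]) dvd g" using insert.IH by blast
  then have "[:-x,1:] * (\<Prod>b\<in>B. [:-b,1:]) dvd f" unfolding g by (rule mult_dvd_mono[OF dvd_refl])
  then show ?case by (simp only: prod.insert[OF insert.hyps])
qed

lemma degree_PB:
  fixes B :: "'a::field set"
  assumes "finite B"
  shows "degree (\<Prod>b\<in>B. [:-b,1:]) = card B"
  by (subst degree_prod_eq_sum_degree) auto

lemma PB_nz: "(\<Prod>b\<in>B. [:-b,1::'a::field:]) \<noteq> 0"
  by (cases "finite B") (auto simp: prod_zero_iff)

lemma coeff_mult_lin:
  "coeff (P * [:b0, a:]) s = b0 * coeff P s + a * (if s = 0 then 0 else coeff P (s - 1))"
  by (cases s) (simp_all add: algebra_simps)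

lemma deg1_repr:
  assumes "degree g \<le> 1"
  shows "g = [:coeff g 0, coeff g 1:]"
proof (rule poly_eqI)
  fix n show "coeff g n = coeff [:coeff g 0, coeff g 1:] n"
    using assms by (cases n; cases "n - 1") (auto simp: coeff_eq_0)
qed

lemma two_by_two:
  fixes x y z :: "'a::field"
  shows "(\<exists>b0 a. (b0 \<noteq> 0 \<or> a \<noteq> 0) \<and> b0*x + a*y = 0 \<and> b0*z + a*x = 0) \<longleftrightarrow> x^2 - y*z = 0"
proof
  assume "\<exists>b0 a. (b0 \<noteq> 0 \<or> a \<noteq> 0) \<and> b0*x + a*y = 0 \<and> b0*z + a*x = 0"
  then obtain b0 a where h: "b0 \<noteq> 0 \<or> a \<noteq> 0" "b0*x + a*y = 0" "b0*z + a*x = 0" by blast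
  have "b0 * (x^2 - y*z) = x * (b0*x + a*y) - y * (b0*z + a*x)" by (simp add: algebra_simps power2_eq_square)
  moreover have "a * (x^2 - y*z) = x * (b0*z + a*x) - z * (b0*x + a*y)" by (simp add: algebra_simps power2_eq_square)
  ultimately show "x^2 - y*z = 0" using h by auto
next
  assume h: "x^2 - y*z = 0"
  show "\<exists>b0 a. (b0 \<noteq> 0 \<or> a \<noteq> 0) \<and> b0*x + a*y = 0 \<and> b0*z + a*x = 0"
  proof (cases "x = 0 \<and> y = 0")
    case True then show ?thesis by (intro exI[of _ 0] exI[of _ 1]) auto
  next
    case False then show ?thesis using h
      by (intro exI[of _ y] exI[of _ "-x"]) (auto simp: algebra_simps power2_eq_square)
  qed
qed


lemma esym_big:
  fixes B :: "'a::field set"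
  assumes "finite B" "card B < t"
  shows "esym t B = 0"
proof -
  have "False" if "T \<subseteq> B" "card T = t" for T
    using card_mono[OF assms(1) that(1)] assms(2) that(2) by simp
  then have "{T. T \<subseteq> B \<and> card T = t} = {}" by blast
  then show ?thesis unfolding esym_def by (simp only: sum.empty)
qed

lemma keyA:
  fixes B :: "'a::field set"
  assumes fin: "finite B" and cB: "card B = k" and rk: "r \<le> k - 1" and k1: "1 \<le> k"
  shows "(\<exists>f\<in>SS k r. f \<noteq> 0 \<and> (\<forall>b\<in>B. poly f b = 0)) \<longleftrightarrow>
         esym (r + 1) B ^ 2 - esym r B * esym (r + 2) B = 0"
proof -
  define P where "P = (\<Prod>b\<in>B. [:-b,1:])"
  define t0 where "t0 = k - r - 1"
  define x where "x = coeff P t0"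
  define z where "z = coeff P (t0 + 1)"
  define y where "y = (if t0 = 0 then 0 else coeff P (t0 - 1))"
  have t0: "k - r = t0 + 1" "t0 + 1 \<le> k" using rk k1 by (auto simp: t0_def)
  define s :: 'a where "s = (-1)^r"
  have s2: "s * s = 1" 
  proof -
    have "s * s = ((-1)*(-1))^r" by (simp add: s_def power_mult_distrib)
    then show ?thesis by simp
  qed
  have xe: "x = - s * esym (r + 1) B"
  proof -
    have "k - t0 = r + 1" using t0 by auto
    then show ?thesis unfolding x_def P_def using coeff_PB[OF fin, of t0] t0 cB by (simp add: s_def)
  qed
  have ze: "z = s * esym r B"
  proof -
    have "k - (t0 + 1) = r" using t0 by auto
    then show ?thesis unfolding z_def P_def using coeff_PB[OF fin, of "t0+1"] t0 cB by (simp add: s_def)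
  qed
  have ye: "y = s * esym (r + 2) B"
  proof (cases "t0 = 0")
    case True
    then have "card B < r + 2" using t0 cB by auto
    then show ?thesis using True esym_big[OF fin] by (simp add: y_def)
  next
    case False
    have "k - (t0 - 1) = r + 2" using t0 False by auto
    then show ?thesis unfolding y_def P_def using False coeff_PB[OF fin, of "t0 - 1"] t0 cB by (simp add: s_def)
  qed
  have D: "x^2 - y*z = esym (r + 1) B ^ 2 - esym r B * esym (r + 2) B"
  proof -
    have "x^2 - y*z = (s*s) * (esym (r + 1) B ^ 2 - esym r B * esym (r + 2) B)"
      unfolding xe ye ze by (simp add: algebra_simps power2_eq_square)
    then show ?thesis using s2 by simp
  qed
  have cf: "coeff (P * [:b0, a:]) t0 = b0 * x + a * y" "coeff (P * [:b0, a:]) (t0 + 1) = b0 * z + a * x" for b0 a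
    unfolding coeff_mult_lin by (auto simp: x_def y_def z_def)
  have degP: "degree P = k" using degree_PB[OF fin] cB by (simp add: P_def)
  have PZ: "P \<noteq> 0" unfolding P_def by (rule PB_nz)
  have "(\<exists>f\<in>SS k r. f \<noteq> 0 \<and> (\<forall>b\<in>B. poly f b = 0)) \<longleftrightarrow>
        (\<exists>b0 a. (b0 \<noteq> 0 \<or> a \<noteq> 0) \<and> b0*x + a*y = 0 \<and> b0*z + a*x = 0)"
  proof
    assume "\<exists>f\<in>SS k r. f \<noteq> 0 \<and> (\<forall>b\<in>B. poly f b = 0)"
    then obtain f where f: "f \<in> SS k r" "f \<noteq> 0" "\<forall>b\<in>B. poly f b = 0" by blast
    have "P dvd f" unfolding P_def by (rule PB_dvd[OF fin f(3)])
    then obtain g where g: "f = P * g" by (elim dvdE)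
    have gz: "g \<noteq> 0" using g f(2) by auto
    have "degree f = k + degree g" using g gz PZ degP by (simp add: degree_mult_eq)
    then have "degree g \<le> 1" using f(1) by (simp add: SS_def)
    then have "g = [:coeff g 0, coeff g 1:]" by (rule deg1_repr)
    then obtain b0 a where gr: "g = [:b0, a:]" by blast
    have ba: "b0 \<noteq> 0 \<or> a \<noteq> 0" using gz gr by auto
    have fe: "f = P * [:b0, a:]" by (simp only: g gr)
    have "coeff (P * [:b0, a:]) t0 = 0" using f(1) unfolding fe[symmetric] by (simp add: SS_def t0_def)
    moreover have "coeff (P * [:b0, a:]) (t0 + 1) = 0" using f(1) unfolding fe[symmetric] t0(1)[symmetric] by (simp add: SS_def)
    ultimately have "b0*x + a*y = 0" "b0*z + a*x = 0" by (simp_all only: cf)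
    then show "\<exists>b0 a. (b0 \<noteq> 0 \<or> a \<noteq> 0) \<and> b0*x + a*y = 0 \<and> b0*z + a*x = 0"
      using ba by blast
  next
    assume "\<exists>b0 a. (b0 \<noteq> 0 \<or> a \<noteq> 0) \<and> b0*x + a*y = 0 \<and> b0*z + a*x = 0"
    then obtain b0 a where h: "b0 \<noteq> 0 \<or> a \<noteq> 0" "b0*x + a*y = 0" "b0*z + a*x = 0" by blast
    define f where "f = P * [:b0, a:]"
    have lz: "[:b0, a:] \<noteq> 0" using h(1) by auto
    have "f \<noteq> 0" unfolding f_def by (rule no_zero_divisors[OF PZ lz])
    moreover have "degree f \<le> k + 1"
    proof -
      have "degree [:b0, a:] \<le> 1" by simp
      then show ?thesis unfolding f_def using degree_mult_le[of P "[:b0, a:]"] degP by linarith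
    qed
    moreover have "coeff f (k - r - 1) = 0" "coeff f (k - r) = 0"
    proof -
      have e: "k - r - 1 = t0" by (simp add: t0_def)
      show "coeff f (k - r - 1) = 0" unfolding e f_def cf(1) by (rule h(2))
      show "coeff f (k - r) = 0" unfolding t0(1) f_def cf(2) by (rule h(3))
    qed
    moreover have "\<forall>b\<in>B. poly f b = 0"
    proof
      fix b assume "b \<in> B"
      then have "poly P b = 0" using fin by (auto simp: P_def poly_prod prod_zero_iff)
      then show "poly f b = 0" unfolding f_def poly_mult by simp
    qed
    ultimately show "\<exists>f\<in>SS k r. f \<noteq> 0 \<and> (\<forall>b\<in>B. poly f b = 0)"
      by (auto simp: SS_def)
  qed
  also have "\<dots> \<longleftrightarrow> x^2 - y*z = 0" by (rule two_by_two)
  finally show ?thesis using D by simp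
qed


lemma cross_exists:
  fixes a1 a2 a3 b1 b2 b3 :: "'a::field"
  shows "\<exists>c1 c2 c3. (c1 \<noteq> 0 \<or> c2 \<noteq> 0 \<or> c3 \<noteq> 0) \<and> a1*c1 + a2*c2 + a3*c3 = 0 \<and> b1*c1 + b2*c2 + b3*c3 = 0"
proof -
  define w1 where "w1 = a2*b3 - a3*b2"
  define w2 where "w2 = a3*b1 - a1*b3"
  define w3 where "w3 = a1*b2 - a2*b1"
  have o1: "a1*w1 + a2*w2 + a3*w3 = 0" "b1*w1 + b2*w2 + b3*w3 = 0"
    by (simp_all add: w1_def w2_def w3_def algebra_simps)
  show ?thesis
  proof (cases "w1 \<noteq> 0 \<or> w2 \<noteq> 0 \<or> w3 \<noteq> 0")
    case True then show ?thesis using o1 by blast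
  next
    case False
    then have w: "w1 = 0" "w2 = 0" "w3 = 0" by auto
    show ?thesis
    proof (cases "a1 = 0 \<and> a2 = 0 \<and> a3 = 0")
      case a0: True
      show ?thesis
      proof (cases "b1 = 0 \<and> b2 = 0 \<and> b3 = 0")
        case True then show ?thesis using a0 by (intro exI[of _ 1] exI[of _ 0]) auto
      next
        case False
        then consider "b1 \<noteq> 0 \<or> b2 \<noteq> 0" | "b1 \<noteq> 0 \<or> b3 \<noteq> 0" | "b2 \<noteq> 0 \<or> b3 \<noteq> 0" by blast
        then show ?thesis
        proof cases
          case 1 then show ?thesis using a0
            by (intro exI[of _ b2] exI[of _ "-b1"] exI[of _ 0]) (auto simp: algebra_simps)
        next
          case 2 then show ?thesis using a0
            by (intro exI[of _ b3] exI[of _ 0] exI[of _ "-b1"]) (auto simp: algebra_simps)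
        next
          case 3 then show ?thesis using a0
            by (intro exI[of _ 0] exI[of _ b3] exI[of _ "-b2"]) (auto simp: algebra_simps)
        qed
      qed
    next
      case False
      then consider "a1 \<noteq> 0 \<or> a2 \<noteq> 0" | "a1 \<noteq> 0 \<or> a3 \<noteq> 0" | "a2 \<noteq> 0 \<or> a3 \<noteq> 0" by blast
      then show ?thesis
      proof cases
        case 1 then show ?thesis using w
          by (intro exI[of _ a2] exI[of _ "-a1"] exI[of _ 0]) (auto simp: algebra_simps w1_def w2_def w3_def)
      next
        case 2 then show ?thesis using w
          by (intro exI[of _ a3] exI[of _ 0] exI[of _ "-a1"]) (auto simp: algebra_simps w1_def w2_def w3_def)
      next
        case 3 then show ?thesis using w
          by (intro exI[of _ 0] exI[of _ a3] exI[of _ "-a2"]) (auto simp: algebra_simps w1_def w2_def w3_def)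
      qed
    qed
  qed
qed

lemma witness_exists:
  fixes \<alpha> :: "nat \<Rightarrow> 'a::field"
  assumes rk: "r \<le> k - 1" and k1: "1 \<le> k"
  shows "\<exists>f\<in>SS k r. f \<noteq> 0 \<and> (\<forall>j<k-1. poly f (\<alpha> j) = 0)"
proof -
  define Q where "Q = (\<Prod>j<k-1. [:-\<alpha> j, 1:])"
  define t0 where "t0 = k - r - 1"
  have t0: "k - r = t0 + 1" using rk k1 by (simp add: t0_def)
  define A where "A i = coeff (Q * monom 1 i) t0" for i
  define Bc where "Bc i = coeff (Q * monom 1 i) (t0 + 1)" for i
  obtain c1 c2 c3 where c: "c1 \<noteq> 0 \<or> c2 \<noteq> 0 \<or> c3 \<noteq> 0"
    "A 0 * c1 + A 1 * c2 + A 2 * c3 = 0" "Bc 0 * c1 + Bc 1 * c2 + Bc 2 * c3 = 0"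
    using cross_exists by blast
  define g :: "'a poly" where "g = monom c1 0 + monom c2 1 + monom c3 2"
  define f where "f = Q * g"
  have fexp: "f = smult c1 (Q * monom 1 0) + smult c2 (Q * monom 1 1) + smult c3 (Q * monom 1 2)"
  proof -
    have mm: "Q * monom c i = smult c (Q * monom 1 i)" for c i
    proof -
      have "monom c i = smult c (monom 1 i)" by (simp add: smult_monom)
      then show ?thesis by (simp only: mult_smult_right)
    qed
    show ?thesis unfolding f_def g_def distrib_left mm[of c1 0] mm[of c2 1] mm[of c3 2] ..
  qed
  have gz: "g \<noteq> 0"
  proof
    assume "g = 0"
    then have "coeff g 0 = 0" "coeff g 1 = 0" "coeff g 2 = 0" by simp_all
    then show False using c(1) by (simp add: g_def)
  qed
  have QZ: "Q \<noteq> 0" unfolding Q_def by (simp add: prod_zero_iff)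
  have degQ: "degree Q = k - 1" unfolding Q_def by (subst degree_prod_eq_sum_degree) auto
  have degg: "degree g \<le> 2" unfolding g_def
    by (intro degree_add_le) (auto intro: order.trans[OF degree_monom_le])
  have "degree f \<le> k + 1"
    unfolding f_def using degree_mult_le[of Q g] degQ degg k1 by linarith
  moreover have "coeff f (k - r - 1) = 0"
    unfolding fexp t0_def[symmetric] using c(2) by (simp add: A_def algebra_simps)
  moreover have "coeff f (k - r) = 0"
    unfolding fexp t0 using c(3) by (simp add: Bc_def algebra_simps)
  moreover have "f \<noteq> 0" unfolding f_def by (rule no_zero_divisors[OF QZ gz])
  moreover have "poly f (\<alpha> j) = 0" if "j < k - 1" for j
  proof -
    have "poly Q (\<alpha> j) = 0" using that by (auto simp: Q_def poly_prod prod_zero_iff)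
    then show ?thesis unfolding f_def poly_mult by simp
  qed
  ultimately show ?thesis by (auto simp: SS_def)
qed


lemma SS_diff: "f \<in> SS k r \<Longrightarrow> g \<in> SS k r \<Longrightarrow> f - g \<in> SS k r"
  unfolding SS_def by (auto intro: order.trans[OF degree_diff_le])

theorem theorem3p11:
  fixes \<alpha> :: "nat \<Rightarrow> 'a::{field,finite}"
    and n k r :: nat
  assumes "3 \<le> k" and "k + 2 \<le> n" and "n \<le> card (UNIV :: 'a set)"
    and "1 \<le> r" and "r \<le> k - 1"
    and "inj_on \<alpha> {..<n}"
  shows "is_MDS n (gen_code n k (G_mat k r \<alpha>)) \<longleftrightarrow>
    (\<forall>B. B \<subseteq> \<alpha> ` {..<n} \<and> card B = k \<longrightarrow>
       esym (r + 1) B ^ 2 - esym r B * esym (r + 2) B \<noteq> 0)"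
proof -
  have k1: "1 \<le> k" using assms(1) by simp
  note rk = assms(5)
  note inj = assms(6)
  define C where "C = gen_code n k (G_mat k r \<alpha>)"
  have CE: "C = ev n \<alpha> ` SS k r" unfolding C_def by (rule code_eq[OF rk k1])
  have dimC: "code_dim C = k" unfolding CE by (rule code_dim_eq[OF rk k1 assms(2) inj])
  define Z where "Z f = {j. j < n \<and> poly f (\<alpha> j) = 0}" for f :: "'a poly"
  define wt where "wt f = card {j. j < n \<and> poly f (\<alpha> j) \<noteq> 0}" for f :: "'a poly"
  have wtZ: "wt f = n - card (Z f)" for f
  proof -
    have "{j. j < n \<and> poly f (\<alpha> j) \<noteq> 0} = {..<n} - Z f" by (auto simp: Z_def)
    moreover have "Z f \<subseteq> {..<n}" by (auto simp: Z_def)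
    ultimately show ?thesis unfolding wt_def by (simp add: card_Diff_subset finite_subset)
  qed
  have Zle: "card (Z f) \<le> n" for f
    using card_mono[of "{..<n}" "Z f"] by (auto simp: Z_def)
  define W where "W = {hamming_dist n c c' | c c'. c \<in> C \<and> c' \<in> C \<and> c \<noteq> c'}"
  have mdW: "min_dist n C = Min W" by (simp add: min_dist_def W_def)
  have degSS: "degree f < n" if "f \<in> SS k r" for f :: "'a poly"
    using that assms(2) by (auto simp: SS_def)
  have W1: "\<exists>f\<in>SS k r. f \<noteq> 0 \<and> w = wt f" if "w \<in> W" for w
  proof -
    obtain c c' where cc: "w = hamming_dist n c c'" "c \<in> C" "c' \<in> C" "c \<noteq> c'"
      using \<open>w \<in> W\<close> unfolding W_def by blast
    obtain f g where fg: "f \<in> SS k r" "g \<in> SS k r" "c = ev n \<alpha> f" "c' = ev n \<alpha> g"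
      using cc(2,3) unfolding CE by blast
    have "f - g \<noteq> 0" using cc(4) fg by auto
    moreover have "w = wt (f - g)"
      unfolding cc(1) hamming_dist_def wt_def fg ev_def by (simp add: poly_diff) (metis (lifting))
    ultimately show ?thesis using SS_diff[OF fg(1,2)] by blast
  qed
  have W2: "wt f \<in> W" if "f \<in> SS k r" "f \<noteq> 0" for f
  proof -
    have z: "(0 :: 'a poly) \<in> SS k r" by (simp add: SS_def)
    have "ev n \<alpha> f \<noteq> ev n \<alpha> 0"
    proof
      assume "ev n \<alpha> f = ev n \<alpha> 0"
      then have "ev n \<alpha> f = 0" by (simp add: ev_def fun_eq_iff)
      then have "f = 0" using ev_zero_imp degSS[OF that(1)] inj by blast
      then show False using that(2) by simp
    qed
    moreover have "wt f = hamming_dist n (ev n \<alpha> f) (ev n \<alpha> 0)"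
      unfolding hamming_dist_def wt_def ev_def by (auto intro!: arg_cong[where f=card])
    ultimately show ?thesis unfolding W_def CE using that(1) z by blast
  qed
  have finW: "finite W"
  proof (rule finite_subset)
    show "W \<subseteq> {..n}"
    proof
      fix w assume "w \<in> W"
      then obtain f where "w = wt f" using W1 by blast
      then show "w \<in> {..n}" using wtZ by simp
    qed
  qed simp
  have good_iff: "(\<forall>f\<in>SS k r. f \<noteq> 0 \<longrightarrow> card (Z f) < k) \<longleftrightarrow>
    (\<forall>B. B \<subseteq> \<alpha> ` {..<n} \<and> card B = k \<longrightarrow> esym (r + 1) B ^ 2 - esym r B * esym (r + 2) B \<noteq> 0)"
  proof
    assume good: "\<forall>f\<in>SS k r. f \<noteq> 0 \<longrightarrow> card (Z f) < k"
    show "\<forall>B. B \<subseteq> \<alpha> ` {..<n} \<and> card B = k \<longrightarrow> esym (r + 1) B ^ 2 - esym r B * esym (r + 2) B \<noteq> 0"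
    proof (intro allI impI notI)
      fix B assume B: "B \<subseteq> \<alpha> ` {..<n} \<and> card B = k" and D: "esym (r + 1) B ^ 2 - esym r B * esym (r + 2) B = 0"
      have finB: "finite B" using B finite_subset by blast
      obtain f where f: "f \<in> SS k r" "f \<noteq> 0" "\<forall>b\<in>B. poly f b = 0"
        using keyA[OF finB _ rk k1] B D by blast
      define J where "J = {j. j < n \<and> \<alpha> j \<in> B}"
      have "\<alpha> ` J = B" using B by (auto simp: J_def)
      moreover have "inj_on \<alpha> J" using inj by (rule inj_on_subset) (auto simp: J_def)
      then have "card J = card (\<alpha> ` J)" by (simp add: card_image)
      with \<open>\<alpha> ` J = B\<close> B have cJ: "card J = k" by simp
      have JZ: "J \<subseteq> Z f" using f(3) by (auto simp: J_def Z_def)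
      have fZ: "finite (Z f)" by (auto simp: Z_def)
      have "k \<le> card (Z f)" using card_mono[OF fZ JZ] cJ by simp
      then show False using good f(1,2) by auto
    qed
  next
    assume cond: "\<forall>B. B \<subseteq> \<alpha> ` {..<n} \<and> card B = k \<longrightarrow> esym (r + 1) B ^ 2 - esym r B * esym (r + 2) B \<noteq> 0"
    show "\<forall>f\<in>SS k r. f \<noteq> 0 \<longrightarrow> card (Z f) < k"
    proof (intro ballI impI, rule ccontr)
      fix f assume f: "f \<in> SS k r" "f \<noteq> 0" and nk: "\<not> card (Z f) < k"
      obtain J where J: "J \<subseteq> Z f" "card J = k"
      proof (rule obtain_subset_with_card_n[of k "Z f"])
        show "k \<le> card (Z f)" using nk by simp
      qed
      have Jn: "J \<subseteq> {..<n}" using J(1) by (auto simp: Z_def)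
      have "inj_on \<alpha> J" using inj Jn by (rule inj_on_subset)
      then have cB: "card (\<alpha> ` J) = k" using J(2) by (simp add: card_image)
      have finB: "finite (\<alpha> ` J)" using Jn finite_subset by blast
      have "\<forall>b\<in>\<alpha> ` J. poly f b = 0" using J(1) by (auto simp: Z_def)
      then have "esym (r + 1) (\<alpha> ` J) ^ 2 - esym r (\<alpha> ` J) * esym (r + 2) (\<alpha> ` J) = 0"
        using keyA[OF finB cB rk k1] f by blast
      moreover have "\<alpha> ` J \<subseteq> \<alpha> ` {..<n}" using Jn by auto
      ultimately show False using cond cB by blast
    qed
  qed
  have "is_MDS n C \<longleftrightarrow> Min W = n - k + 1"
    unfolding is_MDS_def dimC mdW ..
  also have "\<dots> \<longleftrightarrow> (\<forall>f\<in>SS k r. f \<noteq> 0 \<longrightarrow> card (Z f) < k)"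
  proof
    assume M: "Min W = n - k + 1"
    show "\<forall>f\<in>SS k r. f \<noteq> 0 \<longrightarrow> card (Z f) < k"
    proof (intro ballI impI, rule ccontr)
      fix f assume f: "f \<in> SS k r" "f \<noteq> 0" and nk: "\<not> card (Z f) < k"
      have "Min W \<le> wt f" using Min_le[OF finW W2[OF f]] .
      also have "wt f \<le> n - k" using nk wtZ by simp
      finally show False using M assms(2) by simp
    qed
  next
    assume good: "\<forall>f\<in>SS k r. f \<noteq> 0 \<longrightarrow> card (Z f) < k"
    obtain f where f: "f \<in> SS k r" "f \<noteq> 0" "\<forall>j<k-1. poly f (\<alpha> j) = 0"
      using witness_exists[OF rk k1] by blast
    have "{..<k-1} \<subseteq> Z f" using f(3) assms(2) by (auto simp: Z_def)
    then have "k - 1 \<le> card (Z f)" using card_mono[of "Z f" "{..<k-1}"] by (simp add: Z_def)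
    moreover have "card (Z f) < k" using good f(1,2) by simp
    ultimately have "card (Z f) = k - 1" by simp
    then have wf: "wt f = n - k + 1" using wtZ assms(2) k1 by simp
    show "Min W = n - k + 1"
    proof (rule Min_eqI[OF finW])
      fix w assume "w \<in> W"
      then obtain g where g: "g \<in> SS k r" "g \<noteq> 0" "w = wt g" using W1 by metis
      have "card (Z g) < k" using good g(1,2) by simp
      then show "n - k + 1 \<le> w" using g(3) wtZ assms(2) by simp
    next
      show "n - k + 1 \<in> W" using W2[OF f(1,2)] wf by simp
    qed
  qed
  also have "\<dots> \<longleftrightarrow> (\<forall>B. B \<subseteq> \<alpha> ` {..<n} \<and> card B = k \<longrightarrow> esym (r + 1) B ^ 2 - esym r B * esym (r + 2) B \<noteq> 0)"
    by (rule good_iff)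
  finally show ?thesis unfolding C_def .
qed

end
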